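(* Let $n\ge 2$, $\mathcal{O}\in\mathcal{C}_{sp}^{(n)}$, $\nu\in(0,1]$, and $\mathcal{J}\in\mathbf{J}_{\mathcal{O}}^{\nu}$. Then there is a constant $\mu_{n,\nu}$ depending only on $n$ and $\nu$ such that $\|\mathcal{J}\|_2\le\mu_{n,\nu}$, $0\le\mu_{n,\nu}<1$.
   Context: $\imath=\sqrt{-1}$. For $1\le i<j\le n$ and real $\phi,\alpha$, $R(i,j,\phi,\alpha)$ is the $n\times n$ matrix equal to $I_n$ except for entries $(i,i)=(j,j)=\cos\phi$, $(i,j)=-e^{\imath\alpha}\sin\phi$, $(j,i)=e^{-\imath\alpha}\sin\phi$. Let $N=n(n-1)/2$. For $A=(a_{st})\in\mathbb{C}^{n\times n}$ let $c_t=(a_{1t},\dots,a_{t-1,t})^T$, $r_s=(a_{s1},\dots,a_{s,s-1})$ ($2\le s,t\le n$) and $\mathrm{ve}(A)=[c_2^T,\dots,c_n^T,r_2,\dots,r_n]^T\in\mathbb{C}^{2N}$. Let $\nu_{ij}$ be the linear map on $\mathbb{C}^{n\times n}$ setting entries $(i,j),(j,i)$ to zero. For $U=R(i,j,\phi,\alpha)$ the Jacobi annihilator $\mathcal{R}_{ij}(U)$ is the $2N\times 2N$ matrix with $\mathcal{R}_{ij}(U)\mathrm{ve}(A)=\mathrm{ve}(\nu_{ij}(U^*AU))$ for all $A$. For $\nu\in[0,1]$, $\mathbf{R}_{ij}^{\nu}=\{\mathcal{R}_{ij}(U): U=R(i,j,\phi,\alpha),\ |\cos\phi|\ge\nu\}$.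 Let $\mathcal{P}_n=\{(r,s):1\le r<s\le n\}$. For an ordering $\mathcal{O}=(i_0,j_0),\dots,(i_{N-1},j_{N-1})$ of $\mathcal{P}_n$ (each pair exactly once), $\mathbf{J}_{\mathcal{O}}^{\nu}=\{\mathcal{R}_{i_{N-1}j_{N-1}}\cdots\mathcal{R}_{i_0j_0}: \mathcal{R}_{i_kj_k}\in\mathbf{R}_{i_kj_k}^{\nu}\}$ is the class of Jacobi operators; $\|\cdot\|_2$ is the spectral norm. Orderings: $\mathcal{C}_c^{(n)}$ is the set of orderings $(1,2),(\tau_3(1),3),(\tau_3(2),3),\dots,(\tau_n(1),n),\dots,(\tau_n(n-1),n)$ with $\tau_j$ a permutation of $\{1,\dots,j-1\}$; $\mathcal{C}_r^{(n)}$ is the set of orderings $(n-1,n),(n-2,\tau_{n-2}(n-1)),(n-2,\tau_{n-2}(n)),\dots,(1,\tau_1(2)),\dots,(1,\tau_1(n))$ with $\tau_i$ a permutation of $\{i+1,\dots,n\}$, $1\le i\le n-2$. The reverse $\mathcal{O}^{\leftarrow}$ of $(i_0,j_0),\dots,(i_r,j_r)$ is $(i_r,j_r),\dots,(i_0,j_0)$. $\overleftarrow{\mathcal{C}}_c^{(n)}$ and $\overleftarrow{\mathcal{C}}_r^{(n)}$ are the sets of orderings whose reverses lie in $\mathcal{C}_c^{(n)}$, resp. $\mathcal{C}_r^{(n)}$, and $\mathcal{C}_{sp}^{(n)}=\mathcal{C}_c^{(n)}\cup\overleftarrow{\mathcal{C}}_c^{(n)}\cup\mathcal{C}_r^{(n)}\cup\overleftarrow{\mathcal{C}}_r^{(n)}$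 (serial orderings with permutations). *)

theory Defs
  imports Complex_Main
begin

text \<open>n x n complex matrices are functions nat => nat => complex, with indices 1..n
  (entries outside 1..n are never read). Vectors of C^{2N} are lists of length 2N;
  2N x 2N matrices are functions nat => nat => complex, indexed 0..2N-1.\<close>

type_synonym cmat = "nat \<Rightarrow> nat \<Rightarrow> complex"

definition NN :: "nat \<Rightarrow> nat" where
  "NN n = n * (n - 1) div 2"

definition mmul :: "nat \<Rightarrow> cmat \<Rightarrow> cmat \<Rightarrow> cmat" where
  "mmul n A B = (\<lambda>s t. \<Sum>k=1..n. A s k * B k t)"

definition adj :: "cmat \<Rightarrow> cmat" where
  "adj A = (\<lambda>s t. cnj (A t s))"

definition rot :: "nat \<Rightarrow> nat \<Rightarrow> real \<Rightarrow> real \<Rightarrow> cmat" where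
  "rot i j \<phi> \<alpha> = (\<lambda>s t.
     if (s = i \<and> t = i) \<or> (s = j \<and> t = j) then complex_of_real (cos \<phi>)
     else if s = i \<and> t = j then - exp (\<i> * complex_of_real \<alpha>) * complex_of_real (sin \<phi>)
     else if s = j \<and> t = i then exp (- (\<i> * complex_of_real \<alpha>)) * complex_of_real (sin \<phi>)
     else if s = t then 1 else 0)"

definition nuij :: "nat \<Rightarrow> nat \<Rightarrow> cmat \<Rightarrow> cmat" where
  "nuij i j A = (\<lambda>s t. if (s = i \<and> t = j) \<or> (s = j \<and> t = i) then 0 else A s t)"

definition ve :: "nat \<Rightarrow> cmat \<Rightarrow> complex list" where
  "ve n A = concat (map (\<lambda>t. map (\<lambda>s. A s t) [1..<t]) [2..<n+1])
          @ concat (map (\<lambda>s. map (\<lambda>t. A s t) [1..<s]) [2..<n+1])"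

definition matvec :: "nat \<Rightarrow> cmat \<Rightarrow> complex list \<Rightarrow> complex list" where
  "matvec m M x = map (\<lambda>p. \<Sum>q<m. M p q * x ! q) [0..<m]"

definition mmul0 :: "nat \<Rightarrow> cmat \<Rightarrow> cmat \<Rightarrow> cmat" where
  "mmul0 m A B = (\<lambda>p q. \<Sum>k<m. A p k * B k q)"

definition id0 :: cmat where
  "id0 = (\<lambda>p q. if p = q then 1 else 0)"

definition vnorm :: "complex list \<Rightarrow> real" where
  "vnorm x = sqrt (\<Sum>z\<leftarrow>x. (cmod z)^2)"

definition spec_norm :: "nat \<Rightarrow> cmat \<Rightarrow> real" where
  "spec_norm m M = Sup {vnorm (matvec m M x) | x. length x = m \<and> vnorm x = 1}"

definition annihilators :: "nat \<Rightarrow> nat \<Rightarrow> nat \<Rightarrow> real \<Rightarrow> cmat set" where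
  "annihilators n i j \<nu> = {M. \<exists>\<phi> \<alpha>. \<nu> \<le> \<bar>cos \<phi>\<bar> \<and>
      (\<forall>A. matvec (2 * NN n) M (ve n A)
           = ve n (nuij i j (mmul n (mmul n (adj (rot i j \<phi> \<alpha>)) A) (rot i j \<phi> \<alpha>))))}"

text \<open>mprod m [R_0,...,R_{r}] = R_r ... R_0.\<close>
fun mprod :: "nat \<Rightarrow> cmat list \<Rightarrow> cmat" where
  "mprod m [] = id0"
| "mprod m (M # Ms) = mmul0 m (mprod m Ms) M"

definition jacobi_ops :: "nat \<Rightarrow> (nat \<times> nat) list \<Rightarrow> real \<Rightarrow> cmat set" where
  "jacobi_ops n ordr \<nu> = {mprod (2 * NN n) Ms | Ms. length Ms = length ordr \<and>
      (\<forall>k < length ordr. Ms ! k \<in> annihilators n (fst (ordr ! k)) (snd (ordr ! k)) \<nu>)}"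

definition Cc :: "nat \<Rightarrow> (nat \<times> nat) list set" where
  "Cc n = {concat (map (\<lambda>j. map (\<lambda>k. (\<tau> j k, j)) [1..<j]) [2..<n+1]) | \<tau>.
             \<forall>j\<in>{2..n}. bij_betw (\<tau> j) {1..<j} {1..<j}}"

definition Cr :: "nat \<Rightarrow> (nat \<times> nat) list set" where
  "Cr n = {concat (map (\<lambda>i. map (\<lambda>k. (i, \<tau> i k)) [i+1..<n+1]) (rev [1..<n])) | \<tau>.
             \<forall>i\<in>{1..<n}. bij_betw (\<tau> i) {i+1..n} {i+1..n}}"

definition Csp :: "nat \<Rightarrow> (nat \<times> nat) list set" where
  "Csp n = Cc n \<union> rev ` Cc n \<union> Cr n \<union> rev ` Cr n"

end

theory Submission
  imports Defs
begin


definition step :: "nat \<Rightarrow> nat \<Rightarrow> real \<Rightarrow> complex \<Rightarrow> cmat \<Rightarrow> cmat" where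
 "step i j c e A = (\<lambda>s t.
   if (s = i \<and> t = j) \<or> (s = j \<and> t = i) then 0
   else if s = t then A s t
   else if s = i \<and> t \<noteq> j then complex_of_real c * A i t + e * A j t
   else if s = j \<and> t \<noteq> i then - cnj e * A i t + complex_of_real c * A j t
   else if t = i then complex_of_real c * A s i + cnj e * A s j
   else if t = j then - e * A s i + complex_of_real c * A s j
   else A s t)"

lemma step_sym: "i \<noteq> j \<Longrightarrow> step j i c (- cnj e) = step i j c e"
  unfolding step_def by (rule ext)+ auto

definition Off :: "nat set \<Rightarrow> (nat \<times> nat) set" where
  "Off S = {(s,t). s \<in> S \<and> t \<in> S \<and> s \<noteq> t}"

definition off :: "nat set \<Rightarrow> cmat \<Rightarrow> real" where
  "off S A = (\<Sum>(s,t)\<in>Off S. (cmod (A s t))^2)"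

definition inner :: "nat set \<Rightarrow> cmat \<Rightarrow> cmat \<Rightarrow> complex" where
  "inner S A B = (\<Sum>(s,t)\<in>Off S. A s t * cnj (B s t))"

lemma finite_Off: "finite S \<Longrightarrow> finite (Off S)"
proof -
  assume "finite S"
  hence "finite (S \<times> S)" by simp
  moreover have "Off S \<subseteq> S \<times> S" unfolding Off_def by auto
  ultimately show ?thesis using finite_subset by blast
qed

lemma Off_insert: "z \<notin> S \<Longrightarrow> Off (insert z S) = Off S \<union> ((\<lambda>s. (s,z)) ` S \<union> (\<lambda>s. (z,s)) ` S)"
  unfolding Off_def by auto

lemma sum_Off_insert:
  assumes "finite S" "z \<notin> S"
  shows "(\<Sum>p\<in>Off (insert z S). g p) = (\<Sum>p\<in>Off S. g p) + (\<Sum>s\<in>S. g (s,z) + g (z,s))"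
proof -
  have d1: "Off S \<inter> ((\<lambda>s. (s,z)) ` S \<union> (\<lambda>s. (z,s)) ` S) = {}" using assms(2) unfolding Off_def by auto
  have d2: "(\<lambda>s. (s,z)) ` S \<inter> (\<lambda>s. (z,s)) ` S = {}" using assms(2) by auto
  have "(\<Sum>p\<in>Off (insert z S). g p) = (\<Sum>p\<in>Off S. g p) + (\<Sum>p\<in>(\<lambda>s. (s,z)) ` S \<union> (\<lambda>s. (z,s)) ` S. g p)"
    unfolding Off_insert[OF assms(2)] by (rule sum.union_disjoint) (use assms finite_Off d1 in auto)
  also have "(\<Sum>p\<in>(\<lambda>s. (s,z)) ` S \<union> (\<lambda>s. (z,s)) ` S. g p) = (\<Sum>p\<in>(\<lambda>s. (s,z)) ` S. g p) + (\<Sum>p\<in>(\<lambda>s. (z,s)) ` S. g p)"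
    by (rule sum.union_disjoint) (use assms d2 in auto)
  also have "(\<Sum>p\<in>(\<lambda>s. (s,z)) ` S. g p) = (\<Sum>s\<in>S. g (s,z))"
    by (subst sum.reindex) (auto simp: inj_on_def)
  also have "(\<Sum>p\<in>(\<lambda>s. (z,s)) ` S. g p) = (\<Sum>s\<in>S. g (z,s))"
    by (subst sum.reindex) (auto simp: inj_on_def)
  finally show ?thesis by (simp add: sum.distrib)
qed

lemma sum_Off_two:
  assumes "finite S" "i \<in> S" "j \<in> S" "i \<noteq> j"
  shows "(\<Sum>p\<in>Off S. g p) = (\<Sum>p\<in>Off (S - {i,j}). g p)
     + (\<Sum>s\<in>S - {i,j}. g (s,i) + g (i,s) + g (s,j) + g (j,s)) + g (i,j) + g (j,i)"
proof -
  let ?R = "S - {i,j}"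
  have S: "S = insert i (insert j ?R)" using assms by auto
  have fR: "finite ?R" using assms by auto
  have "(\<Sum>p\<in>Off S. g p) = (\<Sum>p\<in>Off (insert j ?R). g p) + (\<Sum>s\<in>insert j ?R. g (s,i) + g (i,s))"
    by (subst S, rule sum_Off_insert) (use assms fR in auto)
  also have "(\<Sum>p\<in>Off (insert j ?R). g p) = (\<Sum>p\<in>Off ?R. g p) + (\<Sum>s\<in>?R. g (s,j) + g (j,s))"
    by (rule sum_Off_insert) (use fR in auto)
  also have "(\<Sum>s\<in>insert j ?R. g (s,i) + g (i,s)) = g (j,i) + g (i,j) + (\<Sum>s\<in>?R. g (s,i) + g (i,s))"
    using fR by simp
  finally show ?thesis by (simp add: sum.distrib algebra_simps)
qed


lemma cmod_sq: "complex_of_real ((cmod z)^2) = z * cnj z"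
  by (rule complex_norm_square)

lemma rot_norm1:
  assumes "c^2 + (cmod e)^2 = 1"
  shows "(cmod (complex_of_real c * x + cnj e * y))^2 + (cmod (- e * x + complex_of_real c * y))^2
         = (cmod x)^2 + (cmod y)^2"
proof -
  have ee: "e * cnj e = 1 - complex_of_real (c^2)"
    using arg_cong[OF assms, of complex_of_real] by (simp add: cmod_sq[symmetric] algebra_simps)
  have "complex_of_real ((cmod (complex_of_real c * x + cnj e * y))^2 + (cmod (- e * x + complex_of_real c * y))^2)
        = complex_of_real ((cmod x)^2 + (cmod y)^2)"
  proof -
    have "complex_of_real ((cmod (complex_of_real c * x + cnj e * y))^2 + (cmod (- e * x + complex_of_real c * y))^2)
       = (e * cnj e + complex_of_real (c^2)) * (x * cnj x + y * cnj y)"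
      unfolding of_real_add cmod_sq by (simp add: algebra_simps power2_eq_square)
    also have "\<dots> = x * cnj x + y * cnj y" using ee by simp
    finally show ?thesis unfolding of_real_add cmod_sq .
  qed
  thus ?thesis using of_real_eq_iff by blast
qed

lemma rot_norm2:
  assumes "c^2 + (cmod e)^2 = 1"
  shows "(cmod (complex_of_real c * x + e * y))^2 + (cmod (- cnj e * x + complex_of_real c * y))^2
         = (cmod x)^2 + (cmod y)^2"
  using rot_norm1[of c "cnj e" x y] assms by simp

lemma off_step:
  assumes "finite S" "i \<in> S" "j \<in> S" "i \<noteq> j" "c^2 + (cmod e)^2 = 1"
  shows "off S (step i j c e A) = off S A - (cmod (A i j))^2 - (cmod (A j i))^2"
proof -
  let ?R = "S - {i,j}"
  let ?B = "step i j c e A"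
  have 1: "(\<Sum>p\<in>Off ?R. (\<lambda>(s,t). (cmod (?B s t))^2) p) = (\<Sum>p\<in>Off ?R. (\<lambda>(s,t). (cmod (A s t))^2) p)"
    by (rule sum.cong) (auto simp: Off_def step_def)
  have 2: "(\<Sum>s\<in>?R. (cmod (?B s i))^2 + (cmod (?B i s))^2 + (cmod (?B s j))^2 + (cmod (?B j s))^2)
        = (\<Sum>s\<in>?R. (cmod (A s i))^2 + (cmod (A i s))^2 + (cmod (A s j))^2 + (cmod (A j s))^2)"
  proof (rule sum.cong)
    fix s assume s: "s \<in> ?R"
    have a: "?B s i = complex_of_real c * A s i + cnj e * A s j" "?B s j = - e * A s i + complex_of_real c * A s j"
         "?B i s = complex_of_real c * A i s + e * A j s" "?B j s = - cnj e * A i s + complex_of_real c * A j s"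
      using s assms(4) by (auto simp: step_def)
    show "(cmod (?B s i))^2 + (cmod (?B i s))^2 + (cmod (?B s j))^2 + (cmod (?B j s))^2
        = (cmod (A s i))^2 + (cmod (A i s))^2 + (cmod (A s j))^2 + (cmod (A j s))^2"
      unfolding a using rot_norm1[OF assms(5), of "A s i" "A s j"] rot_norm2[OF assms(5), of "A i s" "A j s"]
      by linarith
  qed simp
  have 3: "?B i j = 0" "?B j i = 0" by (auto simp: step_def)
  show ?thesis
    unfolding off_def
    apply (subst (1 2) sum_Off_two[OF assms(1-4)])
    using 1 2 3 by simp
qed

lemma inner_step:
  assumes "finite S" "i \<in> S" "j \<in> S" "i \<noteq> j"
  shows "inner S (step i j c e A) B = inner S A (step i j c (-e) B)"
proof -
  let ?R = "S - {i,j}"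
  let ?A = "step i j c e A"
  let ?B = "step i j c (-e) B"
  have 1: "(\<Sum>p\<in>Off ?R. (\<lambda>(s,t). ?A s t * cnj (B s t)) p) = (\<Sum>p\<in>Off ?R. (\<lambda>(s,t). A s t * cnj (?B s t)) p)"
    by (rule sum.cong) (auto simp: Off_def step_def)
  have 2: "(\<Sum>s\<in>?R. ?A s i * cnj (B s i) + ?A i s * cnj (B i s) + ?A s j * cnj (B s j) + ?A j s * cnj (B j s))
        = (\<Sum>s\<in>?R. A s i * cnj (?B s i) + A i s * cnj (?B i s) + A s j * cnj (?B s j) + A j s * cnj (?B j s))"
  proof (rule sum.cong)
    fix s assume s: "s \<in> ?R"
    have a: "?A s i = complex_of_real c * A s i + cnj e * A s j" "?A s j = - e * A s i + complex_of_real c * A s j"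
         "?A i s = complex_of_real c * A i s + e * A j s" "?A j s = - cnj e * A i s + complex_of_real c * A j s"
         "?B s i = complex_of_real c * B s i + cnj (-e) * B s j" "?B s j = - (-e) * B s i + complex_of_real c * B s j"
         "?B i s = complex_of_real c * B i s + (-e) * B j s" "?B j s = - cnj (-e) * B i s + complex_of_real c * B j s"
      using s assms(4) by (auto simp: step_def)
    show "?A s i * cnj (B s i) + ?A i s * cnj (B i s) + ?A s j * cnj (B s j) + ?A j s * cnj (B j s)
        = A s i * cnj (?B s i) + A i s * cnj (?B i s) + A s j * cnj (?B s j) + A j s * cnj (?B j s)"
      unfolding a by (simp add: algebra_simps)
  qed simp
  have 3: "?A i j = 0" "?A j i = 0" "?B i j = 0" "?B j i = 0" by (auto simp: step_def)
  show ?thesis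
    unfolding inner_def
    apply (subst (1 2) sum_Off_two[OF assms(1-4)])
    using 1 2 3 by simp
qed


definition valid :: "real \<Rightarrow> (real \<times> complex) list \<Rightarrow> bool" where
  "valid \<nu> cs = (\<forall>(c,e)\<in>set cs. \<nu> \<le> \<bar>c\<bar> \<and> c^2 + (cmod e)^2 = 1)"

fun run :: "(nat\<times>nat) list \<Rightarrow> (real\<times>complex) list \<Rightarrow> cmat \<Rightarrow> cmat" where
  "run ((i,j)#ps) ((c,e)#cs) A = run ps cs (step i j c e A)"
| "run _ _ A = A"

lemma run_append: "length ps1 = length cs1 \<Longrightarrow> run (ps1@ps2) (cs1@cs2) A = run ps2 cs2 (run ps1 cs1 A)"
proof (induction ps1 cs1 arbitrary: A rule: list_induct2)
  case Nil then show ?case by simp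
next
  case (Cons p ps c cs) then show ?case by (cases p; cases c) simp
qed

lemma valid_Cons: "valid \<nu> ((c,e)#cs) \<longleftrightarrow> \<nu> \<le> \<bar>c\<bar> \<and> c^2 + (cmod e)^2 = 1 \<and> valid \<nu> cs"
  unfolding valid_def by auto

lemma valid_append: "valid \<nu> (xs @ ys) \<longleftrightarrow> valid \<nu> xs \<and> valid \<nu> ys"
  unfolding valid_def by auto

definition inS :: "nat set \<Rightarrow> (nat \<times> nat) list \<Rightarrow> bool" where
  "inS S ps = (\<forall>(i,j)\<in>set ps. i \<in> S \<and> j \<in> S \<and> i \<noteq> j)"

lemma off_run_mono:
  assumes "finite S" "inS S ps" "valid \<nu> cs" "length ps = length cs"
  shows "off S (run ps cs A) \<le> off S A"
  using assms(4,2,3)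
proof (induction ps cs arbitrary: A rule: list_induct2)
  case Nil then show ?case by simp
next
  case (Cons p ps ce cs)
  obtain i j where p: "p = (i,j)" by (cases p)
  obtain c e where ce: "ce = (c,e)" by (cases ce)
  have h: "i \<in> S" "j \<in> S" "i \<noteq> j" using Cons.prems(1) p by (auto simp: inS_def)
  have v: "c^2 + (cmod e)^2 = 1" "valid \<nu> cs" using Cons.prems(2) ce by (auto simp: valid_def)
  have "off S (run (p#ps) (ce#cs) A) = off S (run ps cs (step i j c e A))" using p ce by simp
  also have "\<dots> \<le> off S (step i j c e A)" using Cons.IH[of "step i j c e A"] Cons.prems v by (auto simp: inS_def)
  also have "\<dots> \<le> off S A" using off_step[OF assms(1) h v(1)] by simp
  finally show ?case .
qed

lemma inner_run:
  assumes "finite S" "inS S ps" "length ps = length cs"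
  shows "inner S (run ps cs A) B = inner S A (run (rev ps) (rev (map (\<lambda>(c,e). (c,-e)) cs)) B)"
  using assms(3,2)
proof (induction ps cs arbitrary: A B rule: list_induct2)
  case Nil then show ?case by simp
next
  case (Cons p ps ce cs)
  obtain i j where p: "p = (i,j)" by (cases p)
  obtain c e where ce: "ce = (c,e)" by (cases ce)
  have h: "i \<in> S" "j \<in> S" "i \<noteq> j" using Cons.prems(1) p by (auto simp: inS_def)
  have l: "length (rev ps) = length (rev (map (\<lambda>(c,e). (c,-e)) cs))" using Cons.hyps by simp
  have "inner S (run (p#ps) (ce#cs) A) B = inner S (run ps cs (step i j c e A)) B" using p ce by simp
  also have "\<dots> = inner S (step i j c e A) (run (rev ps) (rev (map (\<lambda>(c,e). (c,-e)) cs)) B)"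
    using Cons.IH Cons.prems by (auto simp: inS_def)
  also have "\<dots> = inner S A (step i j c (-e) (run (rev ps) (rev (map (\<lambda>(c,e). (c,-e)) cs)) B))"
    by (rule inner_step[OF assms(1) h])
  also have "\<dots> = inner S A (run (rev (p#ps)) (rev (map (\<lambda>(c,e). (c,-e)) (ce#cs))) B)"
    using p ce run_append[OF l, of "[(i,j)]" "[(c,-e)]"] by simp
  finally show ?case .
qed

definition colz :: "nat set \<Rightarrow> nat \<Rightarrow> cmat \<Rightarrow> real" where
  "colz S z A = (\<Sum>s\<in>S. (cmod (A s z))^2 + (cmod (A z s))^2)"

lemma off_insert:
  assumes "finite S" "z \<notin> S"
  shows "off (insert z S) A = off S A + colz S z A"
  unfolding off_def colz_def using sum_Off_insert[OF assms, of "\<lambda>(s,t). (cmod (A s t))^2"] by simp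

lemma colz_step:
  assumes "finite S" "i \<in> S" "j \<in> S" "i \<noteq> j" "z \<notin> S" "c^2 + (cmod e)^2 = 1"
  shows "colz S z (step i j c e A) = colz S z A"
proof -
  let ?R = "S - {i,j}"
  let ?B = "step i j c e A"
  have S: "S = insert i (insert j ?R)" using assms by auto
  have fR: "finite ?R" using assms by auto
  have zz: "z \<noteq> i" "z \<noteq> j" using assms by auto
  have sp: "\<And>X. colz S z X = colz ?R z X + ((cmod (X i z))^2 + (cmod (X j z))^2) + ((cmod (X z i))^2 + (cmod (X z j))^2)"
    unfolding colz_def by (subst S) (use fR assms(4) in \<open>simp add: algebra_simps\<close>)
  have 1: "colz ?R z ?B = colz ?R z A"
    unfolding colz_def by (rule sum.cong) (use assms in \<open>auto simp: step_def\<close>)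
  have a: "?B i z = complex_of_real c * A i z + e * A j z" "?B j z = - cnj e * A i z + complex_of_real c * A j z"
     "?B z i = complex_of_real c * A z i + cnj e * A z j" "?B z j = - e * A z i + complex_of_real c * A z j"
    using zz assms(4) by (auto simp: step_def)
  show ?thesis
    unfolding sp[of ?B] sp[of A] 1 a
    using rot_norm1[OF assms(6), of "A z i" "A z j"] rot_norm2[OF assms(6), of "A i z" "A j z"] by linarith
qed

lemma colz_run:
  assumes "finite S" "inS S ps" "valid \<nu> cs" "length ps = length cs" "z \<notin> S"
  shows "colz S z (run ps cs A) = colz S z A"
  using assms(4,2,3)
proof (induction ps cs arbitrary: A rule: list_induct2)
  case Nil then show ?case by simp
next
  case (Cons p ps ce cs)
  obtain i j where p: "p = (i,j)" by (cases p)
  obtain c e where ce: "ce = (c,e)" by (cases ce)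
  have h: "i \<in> S" "j \<in> S" "i \<noteq> j" using Cons.prems(1) p by (auto simp: inS_def)
  have v: "c^2 + (cmod e)^2 = 1" "valid \<nu> cs" using Cons.prems(2) ce by (auto simp: valid_def)
  have "colz S z (run (p#ps) (ce#cs) A) = colz S z (run ps cs (step i j c e A))" using p ce by simp
  also have "\<dots> = colz S z (step i j c e A)" using Cons.IH[of "step i j c e A"] Cons.prems v by (auto simp: inS_def)
  also have "\<dots> = colz S z A" using colz_step[OF assms(1) h assms(5) v(1)] by simp
  finally show ?case .
qed

inductive serial :: "nat set \<Rightarrow> (nat \<times> nat) list \<Rightarrow> bool" where
  base: "serial {a} []"
| ext: "serial S ps \<Longrightarrow> z \<notin> S \<Longrightarrow> distinct qs \<Longrightarrow> set qs = S \<Longrightarrow>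
        (\<forall>q. f q = (q,z) \<or> f q = (z,q)) \<Longrightarrow> serial (insert z S) (ps @ map f qs)"

lemma serial_props: "serial S ps \<Longrightarrow> finite S \<and> S \<noteq> {} \<and> inS S ps"
proof (induction rule: serial.induct)
  case (base a) then show ?case by (simp add: inS_def)
next
  case (ext S ps z qs f)
  have "inS (insert z S) (map f qs)"
    unfolding inS_def
  proof (rule ballI)
    fix p assume "p \<in> set (map f qs)"
    then obtain q where q: "q \<in> set qs" "p = f q" by auto
    have "f q = (q,z) \<or> f q = (z,q)" using ext(5) by blast
    thus "case p of (i,j) \<Rightarrow> i \<in> insert z S \<and> j \<in> insert z S \<and> i \<noteq> j" using q ext(2,4) by auto
  qed
  moreover have "inS (insert z S) ps" using ext unfolding inS_def by auto
  ultimately show ?case using ext by (auto simp: inS_def)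
qed


lemma run_normalize:
  assumes "\<forall>q. f q = (q,z) \<or> f q = (z,q)" "\<forall>q\<in>set qs. q \<noteq> z" "length qs = length cs" "valid \<nu> cs"
  shows "\<exists>cs'. length cs' = length qs \<and> valid \<nu> cs' \<and> (\<forall>A. run (map f qs) cs A = run (map (\<lambda>q. (q,z)) qs) cs' A)"
  using assms(3,2,4)
proof (induction qs cs rule: list_induct2)
  case Nil then show ?case by simp
next
  case (Cons q qs ce cs)
  obtain c e where ce: "ce = (c,e)" by (cases ce)
  obtain cs' where cs': "length cs' = length qs" "valid \<nu> cs'" "\<forall>A. run (map f qs) cs A = run (map (\<lambda>q. (q,z)) qs) cs' A"
    using Cons by (auto simp: valid_def)
  have qz: "q \<noteq> z" using Cons.prems by auto
  have v: "\<nu> \<le> \<bar>c\<bar>" "c^2 + (cmod e)^2 = 1" using Cons.prems(2) ce by (auto simp: valid_def)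
  show ?case
  proof (cases "f q = (q,z)")
    case True
    show ?thesis
      by (rule exI[of _ "(c,e)#cs'"]) (use True cs' v ce in \<open>simp add: valid_def\<close>)
  next
    case False
    hence fq: "f q = (z,q)" using assms(1) by blast
    have "step z q c e = step q z c (- cnj e)" using step_sym[of q z c "- cnj e"] qz by simp
    thus ?thesis
      by (intro exI[of _ "(c,- cnj e)#cs'"]) (use fq cs' v ce in \<open>simp add: valid_def\<close>)
  qed
qed

lemma e_le1: "c^2 + (cmod e)^2 = 1 \<Longrightarrow> cmod e \<le> 1"
  by (metis abs_norm_cancel abs_square_le_1 le_add_same_cancel2 zero_le_power2)

lemma mix_bound:
  assumes "\<nu> \<le> \<bar>c\<bar>" "c^2 + (cmod e)^2 = 1" and that: "cmod a = cmod e"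
  shows "\<nu> * cmod y - cmod x \<le> cmod (a * x + complex_of_real c * y)"
proof -
  have "cmod (a * x + complex_of_real c * y) \<ge> cmod (complex_of_real c * y) - cmod (a * x)"
    by (metis add.commute norm_diff_ineq)
  moreover have "cmod (complex_of_real c * y) = \<bar>c\<bar> * cmod y" by (simp add: norm_mult)
  moreover have "cmod (a * x) \<le> cmod x" using e_le1[OF assms(2)] that
    by (simp add: norm_mult mult_left_le_one_le)
  moreover have "\<nu> * cmod y \<le> \<bar>c\<bar> * cmod y" using assms(1) by (simp add: mult_right_mono)
  ultimately show ?thesis by linarith
qed

lemma track:
  assumes "z \<notin> S" "distinct qs" "set qs \<subseteq> S" "length qs = length cs" "valid \<nu> cs" "\<nu> \<le> 1" "0 \<le> \<nu>"
  shows "(\<forall>r t. r \<in> S - set qs \<longrightarrow> t \<in> S - set qs \<longrightarrow> r \<noteq> t \<longrightarrow> run (map (\<lambda>q. (q,z)) qs) cs A r t = A r t) \<and>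
   (\<forall>r \<in> S - set qs. \<nu>^length qs * cmod (A r z) \<le> cmod (run (map (\<lambda>q. (q,z)) qs) cs A r z) + (\<Sum>q\<in>set qs. cmod (A r q))
      \<and> \<nu>^length qs * cmod (A z r) \<le> cmod (run (map (\<lambda>q. (q,z)) qs) cs A z r) + (\<Sum>q\<in>set qs. cmod (A q r)))"
  using assms(2-5)
proof (induction qs arbitrary: cs rule: rev_induct)
  case Nil then show ?case by simp
next
  case (snoc q qs cs0)
  obtain cs ce where cs0: "cs0 = cs @ [ce]" using snoc.prems(3) by (cases cs0 rule: rev_exhaust) auto
  obtain c e where ce: "ce = (c,e)" by (cases ce)
  have len: "length qs = length cs" using snoc.prems(3) cs0 by simp
  have v: "valid \<nu> cs" "\<nu> \<le> \<bar>c\<bar>" "c^2 + (cmod e)^2 = 1" using snoc.prems(4) cs0 ce by (auto simp: valid_def)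
  have IH: "(\<forall>r t. r \<in> S - set qs \<longrightarrow> t \<in> S - set qs \<longrightarrow> r \<noteq> t \<longrightarrow> run (map (\<lambda>q. (q,z)) qs) cs A r t = A r t) \<and>
   (\<forall>r \<in> S - set qs. \<nu>^length qs * cmod (A r z) \<le> cmod (run (map (\<lambda>q. (q,z)) qs) cs A r z) + (\<Sum>q\<in>set qs. cmod (A r q))
      \<and> \<nu>^length qs * cmod (A z r) \<le> cmod (run (map (\<lambda>q. (q,z)) qs) cs A z r) + (\<Sum>q\<in>set qs. cmod (A q r)))"
    using snoc.IH[OF _ _ len v(1)] snoc.prems by auto
  let ?X = "run (map (\<lambda>q. (q,z)) qs) cs A"
  have X': "run (map (\<lambda>q. (q,z)) (qs@[q])) cs0 A = step q z c e ?X"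
    using run_append[of "map (\<lambda>q. (q,z)) qs" cs "[(q,z)]" "[(c,e)]" A] len cs0 ce by simp
  have qS: "q \<in> S - set qs" using snoc.prems by auto
  have qz: "q \<noteq> z" using qS assms(1) by auto
  show ?case
  proof (rule conjI; intro allI impI ballI)
    fix r t assume r: "r \<in> S - set (qs@[q])" and t: "t \<in> S - set (qs@[q])" and rt: "r \<noteq> t"
    have "step q z c e ?X r t = ?X r t" using r t rt assms(1) by (auto simp: step_def)
    thus "run (map (\<lambda>q. (q,z)) (qs@[q])) cs0 A r t = A r t" unfolding X' using IH r t rt by auto
  next
    fix r assume r: "r \<in> S - set (qs@[q])"
    have rq: "r \<noteq> q" "r \<noteq> z" "r \<in> S - set qs" using r assms(1) by auto
    have Xrq: "?X r q = A r q" "?X q r = A q r" using IH rq qS by auto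
    have e1: "step q z c e ?X r z = - e * A r q + complex_of_real c * ?X r z"
      using rq Xrq qz by (auto simp: step_def)
    have e2: "step q z c e ?X z r = - cnj e * A q r + complex_of_real c * ?X z r"
      using rq Xrq qz by (auto simp: step_def)
    have b1: "\<nu> * cmod (?X r z) - cmod (A r q) \<le> cmod (step q z c e ?X r z)"
      unfolding e1 by (rule mix_bound[OF v(2,3)]) simp
    have b2: "\<nu> * cmod (?X z r) - cmod (A q r) \<le> cmod (step q z c e ?X z r)"
      unfolding e2 by (rule mix_bound[OF v(2,3)]) simp
    have s1: "(\<Sum>q\<in>set (qs@[q]). cmod (A r q)) = cmod (A r q) + (\<Sum>q\<in>set qs. cmod (A r q))"
      using qS by simp
    have s2: "(\<Sum>q\<in>set (qs@[q]). cmod (A q r)) = cmod (A q r) + (\<Sum>q\<in>set qs. cmod (A q r))"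
      using qS by simp
    have i1: "\<nu>^length qs * cmod (A r z) \<le> cmod (?X r z) + (\<Sum>q\<in>set qs. cmod (A r q))"
     and i2: "\<nu>^length qs * cmod (A z r) \<le> cmod (?X z r) + (\<Sum>q\<in>set qs. cmod (A q r))"
      using IH rq by auto
    have p1: "\<nu> * (\<Sum>q\<in>set qs. cmod (A r q)) \<le> (\<Sum>q\<in>set qs. cmod (A r q))"
      by (rule mult_left_le_one_le) (use assms(6,7) in \<open>auto intro: sum_nonneg\<close>)
    have p2: "\<nu> * (\<Sum>q\<in>set qs. cmod (A q r)) \<le> (\<Sum>q\<in>set qs. cmod (A q r))"
      by (rule mult_left_le_one_le) (use assms(6,7) in \<open>auto intro: sum_nonneg\<close>)
    have m1: "\<nu> * (\<nu>^length qs * cmod (A r z)) \<le> \<nu> * (cmod (?X r z) + (\<Sum>q\<in>set qs. cmod (A r q)))"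
      using i1 assms(7) by (rule mult_left_mono)
    have m2: "\<nu> * (\<nu>^length qs * cmod (A z r)) \<le> \<nu> * (cmod (?X z r) + (\<Sum>q\<in>set qs. cmod (A q r)))"
      using i2 assms(7) by (rule mult_left_mono)
    show "\<nu>^length (qs@[q]) * cmod (A r z) \<le> cmod (run (map (\<lambda>q. (q,z)) (qs@[q])) cs0 A r z) + (\<Sum>q\<in>set (qs@[q]). cmod (A r q))
      \<and> \<nu>^length (qs@[q]) * cmod (A z r) \<le> cmod (run (map (\<lambda>q. (q,z)) (qs@[q])) cs0 A z r) + (\<Sum>q\<in>set (qs@[q]). cmod (A q r))"
      unfolding X' s1 s2 using b1 b2 m1 m2 p1 p2 by (simp add: algebra_simps)
  qed
qed


lemma off_term:
  assumes "finite S" "r \<in> S" "q \<in> S" "r \<noteq> q"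
  shows "(cmod (A r q))^2 \<le> off S A"
proof -
  have "(r,q) \<in> Off S" using assms by (simp add: Off_def)
  have "(\<lambda>(s,t). (cmod (A s t))^2) (r,q) \<le> (\<Sum>p\<in>Off S. (\<lambda>(s,t). (cmod (A s t))^2) p)"
    by (rule member_le_sum) (auto simp: \<open>(r,q) \<in> Off S\<close> finite_Off[OF assms(1)])
  thus ?thesis unfolding off_def by simp
qed
lemma off_nonneg: "0 \<le> off S A"
  unfolding off_def by (auto intro: sum_nonneg)

lemma split_at: "m < length xs \<Longrightarrow> xs = take m xs @ [xs!m] @ drop (Suc m) xs"
  by (simp add: Cons_nth_drop_Suc)

lemma phase2_point:
  fixes A :: cmat
  assumes fS: "finite S" and zS: "z \<notin> S" and dq: "distinct qs" and sq: "set qs = S"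
    and len: "length cs = length qs" and v: "valid \<nu> cs" and nu: "0 < \<nu>" "\<nu> \<le> 1"
    and r: "r \<in> S"
  defines "W \<equiv> (off (insert z S) A - off (insert z S) (run (map (\<lambda>q. (q,z)) qs) cs A)) + off S A"
  shows "(cmod (A r z))^2 \<le> (1 + real (card S))^2 / \<nu>^(2 * card S) * W
       \<and> (cmod (A z r))^2 \<le> (1 + real (card S))^2 / \<nu>^(2 * card S) * W"
proof -
  let ?k = "card S"
  obtain m where m: "m < length qs" "qs ! m = r" proof -
    have "r \<in> set qs" using r sq by simp
    then show ?thesis using that by (auto simp: in_set_conv_nth)
  qed
  obtain c e where ce: "cs ! m = (c,e)" by (cases "cs ! m")
  note qsplit = split_at[OF m(1), unfolded m(2)]
  have ml: "m < length cs" using m(1) len by simp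
  note csplit = split_at[OF ml, unfolded ce]
  have vce: "\<nu> \<le> \<bar>c\<bar>" "c^2 + (cmod e)^2 = 1" using v ce m len nth_mem[of m cs] by (auto simp: valid_def)
  let ?X = "run (map (\<lambda>q. (q,z)) (take m qs)) (take m cs) A"
  let ?Y = "step r z c e ?X"
  let ?F = "run (map (\<lambda>q. (q,z)) qs) cs A"
  let ?S' = "insert z S"
  have fS': "finite ?S'" using fS by simp
  have rz: "r \<noteq> z" using r zS by auto
  have lt: "length (map (\<lambda>q. (q,z)) (take m qs)) = length (take m cs)" using len by simp
  have F: "?F = run (map (\<lambda>q. (q,z)) (drop (Suc m) qs)) (drop (Suc m) cs) ?Y"
    apply (subst qsplit, subst csplit)
    using run_append[OF lt, of "map (\<lambda>q. (q,z)) ([r] @ drop (Suc m) qs)" "[(c,e)] @ drop (Suc m) cs" A]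
    by simp
  have inS1: "inS ?S' (map (\<lambda>q. (q,z)) (drop (Suc m) qs))"
    unfolding inS_def using sq zS by (auto dest: in_set_dropD)
  have inS0: "inS ?S' (map (\<lambda>q. (q,z)) (take m qs))"
    unfolding inS_def using sq zS by (auto dest: in_set_takeD)
  have vd: "valid \<nu> (drop (Suc m) cs)" "valid \<nu> (take m cs)" using v by (auto simp: valid_def dest: in_set_dropD in_set_takeD)
  have "off ?S' ?F \<le> off ?S' ?Y"
    unfolding F by (rule off_run_mono[OF fS' inS1 vd(1)]) (use len in simp)
  also have "\<dots> = off ?S' ?X - (cmod (?X r z))^2 - (cmod (?X z r))^2"
    by (rule off_step) (use fS r rz vce in auto)
  also have "off ?S' ?X \<le> off ?S' A"
    by (rule off_run_mono[OF fS' inS0 vd(2)]) (use len in simp)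
  finally have piv: "(cmod (?X r z))^2 + (cmod (?X z r))^2 \<le> off ?S' A - off ?S' ?F" by simp
  have L2: "0 \<le> off ?S' A - off ?S' ?F"
    using off_run_mono[OF fS' _ v] len sq zS by (force simp: inS_def)
  have W0: "0 \<le> W" unfolding W_def using L2 off_nonneg[of S A] by simp
  let ?M = "sqrt W"
  have X1: "cmod (?X r z) \<le> ?M" "cmod (?X z r) \<le> ?M"
  proof -
    have "(cmod (?X r z))^2 \<le> W" "(cmod (?X z r))^2 \<le> W"
      using piv off_nonneg[of S A] zero_le_power2[of "cmod (?X r z)"] zero_le_power2[of "cmod (?X z r)"]
      unfolding W_def by linarith+
    thus "cmod (?X r z) \<le> ?M" "cmod (?X z r) \<le> ?M" by (auto intro: real_le_rsqrt)
  qed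
  have "distinct (take m qs @ [r] @ drop (Suc m) qs)" by (subst qsplit[symmetric]) (rule dq)
  hence rt: "r \<in> S - set (take m qs)" using r by simp
  have tr: "\<nu>^length (take m qs) * cmod (A r z) \<le> cmod (?X r z) + (\<Sum>q\<in>set (take m qs). cmod (A r q))
      \<and> \<nu>^length (take m qs) * cmod (A z r) \<le> cmod (?X z r) + (\<Sum>q\<in>set (take m qs). cmod (A q r))"
    using track[of z S "take m qs" "take m cs" \<nu> A] zS dq sq len vd(2) nu rt
    by (auto dest: in_set_takeD)
  have sb1: "(\<Sum>q\<in>set (take m qs). cmod (A r q)) \<le> real ?k * ?M"
  proof -
    have "(\<Sum>q\<in>set (take m qs). cmod (A r q)) \<le> (\<Sum>q\<in>set (take m qs). ?M)"
    proof (rule sum_mono)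
      fix q assume q: "q \<in> set (take m qs)"
      have "q \<in> S" "q \<noteq> r" using q rt sq by (auto dest: in_set_takeD)
      hence "(cmod (A r q))^2 \<le> W" using off_term[OF fS r, of q A] L2 unfolding W_def by auto
      thus "cmod (A r q) \<le> ?M" by (rule real_le_rsqrt)
    qed
    also have "\<dots> = real (card (set (take m qs))) * ?M" by simp
    also have "\<dots> \<le> real ?k * ?M"
    proof -
      have "card (set (take m qs)) \<le> card S"
        by (rule card_mono[OF fS]) (use sq in \<open>auto dest: in_set_takeD\<close>)
      thus ?thesis using W0 by (intro mult_right_mono) auto
    qed
    finally show ?thesis .
  qed
  have sb2: "(\<Sum>q\<in>set (take m qs). cmod (A q r)) \<le> real ?k * ?M"
  proof -
    have "(\<Sum>q\<in>set (take m qs). cmod (A q r)) \<le> (\<Sum>q\<in>set (take m qs). ?M)"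
    proof (rule sum_mono)
      fix q assume q: "q \<in> set (take m qs)"
      have "q \<in> S" "q \<noteq> r" using q rt sq by (auto dest: in_set_takeD)
      hence "(cmod (A q r))^2 \<le> W" using off_term[OF fS _ r, of q A] L2 unfolding W_def by auto
      thus "cmod (A q r) \<le> ?M" by (rule real_le_rsqrt)
    qed
    also have "\<dots> = real (card (set (take m qs))) * ?M" by simp
    also have "\<dots> \<le> real ?k * ?M"
    proof -
      have "card (set (take m qs)) \<le> card S"
        by (rule card_mono[OF fS]) (use sq in \<open>auto dest: in_set_takeD\<close>)
      thus ?thesis using W0 by (intro mult_right_mono) auto
    qed
    finally show ?thesis .
  qed
  have lm: "length (take m qs) \<le> ?k" using m sq dq distinct_card by fastforce
  have pw: "\<nu>^?k \<le> \<nu>^length (take m qs)" using nu lm by (simp add: power_decreasing)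
  have pos: "0 < \<nu>^?k" using nu by simp
  have key: "\<And>a. 0 \<le> a \<Longrightarrow> \<nu>^length (take m qs) * a \<le> (1 + real ?k) * ?M \<Longrightarrow> a^2 \<le> (1 + real ?k)^2 / \<nu>^(2 * ?k) * W"
  proof -
    fix a :: real assume a: "0 \<le> a" "\<nu>^length (take m qs) * a \<le> (1 + real ?k) * ?M"
    have "\<nu>^?k * a \<le> (1 + real ?k) * ?M" using a pw mult_right_mono[OF pw a(1)] by linarith
    hence "(\<nu>^?k * a)^2 \<le> ((1 + real ?k) * ?M)^2" using a pos by (intro power_mono) auto
    hence "\<nu>^(2*?k) * a^2 \<le> (1 + real ?k)^2 * W" using W0 by (simp add: power_mult_distrib power_mult[symmetric] mult.commute)
    moreover have "0 < \<nu>^(2*?k)" using nu by simp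
    ultimately show "a^2 \<le> (1 + real ?k)^2 / \<nu>^(2 * ?k) * W" by (simp add: field_simps)
  qed
  show ?thesis
  proof
    show "(cmod (A r z))^2 \<le> (1 + real ?k)^2 / \<nu>^(2 * ?k) * W"
      by (rule key) (use tr X1 sb1 in \<open>auto simp: algebra_simps\<close>)
    show "(cmod (A z r))^2 \<le> (1 + real ?k)^2 / \<nu>^(2 * ?k) * W"
      by (rule key) (use tr X1 sb2 in \<open>auto simp: algebra_simps\<close>)
  qed
qed


lemma arith_comb:
  fixes \<kappa> K b c b1 L2 :: real
  assumes "0 \<le> \<kappa>" "\<kappa> < 1" "0 < K" "0 \<le> b" "0 \<le> c" "0 \<le> b1" "b1 \<le> \<kappa> * b" "0 \<le> L2"
    "c \<le> K * (L2 + b1)"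
  shows "b1 + c - L2 \<le> (1 - (1 - \<kappa>) / (1 + 2 * K)) * (b + c)"
proof -
  have pos: "0 < 1 + 2 * K" using assms by simp
  have goal: "(1 + 2 * K) * (b1 + c - L2) \<le> (2 * K + \<kappa>) * (b + c)"
  proof (cases "c \<le> 2 * K * b")
    case True
    have "(1 + 2 * K) * (b1 + c - L2) \<le> (1 + 2 * K) * (\<kappa> * b + c)"
      using assms pos by (intro mult_left_mono) auto
    also have "\<dots> \<le> (2 * K + \<kappa>) * (b + c)"
    proof -
      have "c * (1 - \<kappa>) \<le> (2 * K * b) * (1 - \<kappa>)" using True assms by (intro mult_right_mono) auto
      thus ?thesis by (simp add: algebra_simps)
    qed
    finally show ?thesis .
  next
    case False
    have b1b: "b1 \<le> b" using assms mult_right_mono[of \<kappa> 1 b] by linarith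
    have "c \<le> K * L2 + K * b" using assms(9) b1b assms(3) by (smt (verit) distrib_left mult_left_mono)
    hence "c / K \<le> L2 + b" using assms(3) by (simp add: field_simps)
    moreover have "2 * b < c / K" using False assms(3) by (simp add: field_simps)
    ultimately have L: "c / (2 * K) \<le> L2" by (simp add: field_simps)
    have "(1 + 2 * K) * (b1 + c - L2) \<le> (1 + 2 * K) * (b + c - c / (2 * K))"
      using b1b L pos by (intro mult_left_mono) auto
    also have "\<dots> = (1 + 2 * K) * (b + c) - c * (1 + 2 * K) / (2 * K)" using assms(3) by (simp add: field_simps)
    also have "\<dots> \<le> (1 + 2 * K) * (b + c) - (b + c)"
    proof -
      have "(b + c) * (2 * K) \<le> c * (1 + 2 * K)" using False by (simp add: algebra_simps)
      hence "b + c \<le> c * (1 + 2 * K) / (2 * K)" using assms(3) by (simp add: field_simps)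
      thus ?thesis by simp
    qed
    also have "\<dots> \<le> (2 * K + \<kappa>) * (b + c)" using assms by (simp add: algebra_simps)
    finally show ?thesis .
  qed
  have "b1 + c - L2 \<le> (2 * K + \<kappa>) * (b + c) / (1 + 2 * K)" using goal pos by (simp add: field_simps)
  also have "\<dots> = (1 - (1 - \<kappa>) / (1 + 2 * K)) * (b + c)" using pos by (simp add: field_simps)
  finally show ?thesis .
qed

lemma phase2_colz:
  fixes A :: cmat
  assumes fS: "finite S" and zS: "z \<notin> S" and dq: "distinct qs" and sq: "set qs = S"
    and len: "length cs = length qs" and v: "valid \<nu> cs" and nu: "0 < \<nu>" "\<nu> \<le> 1"
  shows "colz S z A \<le> (2 * real (card S) * (1 + real (card S))^2 / \<nu>^(2 * card S))
     * ((off (insert z S) A - off (insert z S) (run (map (\<lambda>q. (q,z)) qs) cs A)) + off S A)"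
proof -
  let ?W = "(off (insert z S) A - off (insert z S) (run (map (\<lambda>q. (q,z)) qs) cs A)) + off S A"
  let ?C = "(1 + real (card S))^2 / \<nu>^(2 * card S)"
  have "colz S z A \<le> (\<Sum>r\<in>S. ?C * ?W + ?C * ?W)"
    unfolding colz_def
  proof (rule sum_mono)
    fix r assume "r \<in> S"
    from phase2_point[OF fS zS dq sq len v nu this, of A]
    show "(cmod (A r z))^2 + (cmod (A z r))^2 \<le> ?C * ?W + ?C * ?W" by linarith
  qed
  also have "\<dots> = (2 * real (card S) * (1 + real (card S))^2 / \<nu>^(2 * card S)) * ?W" by simp
  finally show ?thesis .
qed

lemma off_singleton: "off {a} A = 0"
proof -
  have "Off {a} = {}" unfolding Off_def by auto
  thus ?thesis unfolding off_def by simp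
qed

lemma main_serial:
  assumes nu: "0 < \<nu>" "\<nu> \<le> 1"
  shows "\<exists>\<kappa>. 0 \<le> \<kappa> \<and> \<kappa> < 1 \<and> (\<forall>S ps cs A. serial S ps \<longrightarrow> card S = k \<longrightarrow> length cs = length ps \<longrightarrow>
      valid \<nu> cs \<longrightarrow> off S (run ps cs A) \<le> \<kappa> * off S A)"
proof (induction k)
  case 0
  show ?case
    by (rule exI[of _ 0]) (auto dest: serial_props)
next
  case (Suc k)
  then obtain \<kappa> where k: "0 \<le> \<kappa>" "\<kappa> < 1" and IH: "\<And>S ps cs A. serial S ps \<Longrightarrow> card S = k \<Longrightarrow> length cs = length ps \<Longrightarrow>
      valid \<nu> cs \<Longrightarrow> off S (run ps cs A) \<le> \<kappa> * off S A" by blast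
  define K where "K = 2 * real k * (1 + real k)^2 / \<nu>^(2 * k) + 1"
  have "0 \<le> 2 * real k * (1 + real k)^2 / \<nu>^(2 * k)"
    by (intro divide_nonneg_pos mult_nonneg_nonneg) (use nu in auto)
  hence K0: "0 < K" unfolding K_def by linarith
  define \<kappa>' where "\<kappa>' = 1 - (1 - \<kappa>) / (1 + 2 * K)"
  have k': "0 \<le> \<kappa>'" "\<kappa>' < 1"
  proof -
    have "(1 - \<kappa>) / (1 + 2 * K) \<le> 1" using K0 k by (simp add: field_simps)
    moreover have "0 < (1 - \<kappa>) / (1 + 2 * K)" using K0 k by simp
    ultimately show "0 \<le> \<kappa>'" "\<kappa>' < 1" unfolding \<kappa>'_def by auto
  qed
  show ?case
  proof (intro exI[of _ \<kappa>'] conjI k' allI impI)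
    fix S ps cs A assume ser: "serial S ps" and cS: "card S = Suc k" and len: "length cs = length ps" and v: "valid \<nu> cs"
    from ser show "off S (run ps cs A) \<le> \<kappa>' * off S A"
    proof (cases rule: serial.cases)
      case (base a)
      then show ?thesis by (simp add: off_singleton)
    next
      case (ext S0 ps0 z qs f)
      have p0: "finite S0" "inS S0 ps0" using serial_props[OF ext(3)] by auto
      have cS0: "card S0 = k" using cS ext p0 by simp
      let ?cs1 = "take (length ps0) cs" and ?cs2 = "drop (length ps0) cs"
      have l1: "length ps0 = length ?cs1" using len ext by simp
      have l2: "length qs = length ?cs2" using len ext by simp
      have v1: "valid \<nu> ?cs1" "valid \<nu> ?cs2" using v by (auto simp: valid_def dest: in_set_takeD in_set_dropD)
      have csplit: "cs = ?cs1 @ ?cs2" by simp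
      let ?A1 = "run ps0 ?cs1 A"
      have run1: "run ps cs A = run (map f qs) ?cs2 ?A1"
        unfolding ext(2) by (subst csplit, rule run_append[OF l1])
      obtain cs2' where cs2': "length cs2' = length qs" "valid \<nu> cs2'"
        "\<forall>A. run (map f qs) ?cs2 A = run (map (\<lambda>q. (q,z)) qs) cs2' A"
        using run_normalize[of f z qs ?cs2 \<nu>] ext l2 v1 by auto
      let ?A2 = "run (map (\<lambda>q. (q,z)) qs) cs2' ?A1"
      have run2: "run ps cs A = ?A2" using run1 cs2' by simp
      have h1: "off S0 ?A1 \<le> \<kappa> * off S0 A" using IH[OF ext(3) cS0] l1 v1 by simp
      have h2: "colz S0 z ?A1 = colz S0 z A" using colz_run[OF p0 v1(1) l1 ext(4)] .
      have h3: "colz S0 z ?A1 \<le> (2 * real (card S0) * (1 + real (card S0))^2 / \<nu>^(2 * card S0))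
         * ((off (insert z S0) ?A1 - off (insert z S0) ?A2) + off S0 ?A1)"
        by (rule phase2_colz[OF p0(1) ext(4,5,6)]) (use cs2' nu in auto)
      have L2: "0 \<le> off (insert z S0) ?A1 - off (insert z S0) ?A2"
        using off_run_mono[of "insert z S0" "map (\<lambda>q. (q,z)) qs" \<nu> cs2' ?A1] p0 cs2' ext(6) ext(4)
        by (force simp: inS_def)
      have h4: "colz S0 z ?A1 \<le> K * ((off (insert z S0) ?A1 - off (insert z S0) ?A2) + off S0 ?A1)"
      proof -
        have "0 \<le> (off (insert z S0) ?A1 - off (insert z S0) ?A2) + off S0 ?A1" using L2 off_nonneg[of S0 ?A1] by simp
        moreover have "2 * real (card S0) * (1 + real (card S0))^2 / \<nu>^(2 * card S0) \<le> K" unfolding K_def cS0 by simp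
        ultimately show ?thesis using h3 order_trans mult_right_mono by blast
      qed
      have e1: "off S A = off S0 A + colz S0 z A" unfolding ext(1) by (rule off_insert[OF p0(1) ext(4)])
      have e2: "off S ?A1 = off S0 ?A1 + colz S0 z A" unfolding ext(1) using off_insert[OF p0(1) ext(4)] h2 by simp
      have "off S (run ps cs A) = off S0 ?A1 + colz S0 z A - (off S ?A1 - off S ?A2)"
        unfolding run2 e2 by simp
      also have "\<dots> \<le> \<kappa>' * (off S0 A + colz S0 z A)"
        unfolding \<kappa>'_def
        apply (rule arith_comb[OF k K0 off_nonneg _ off_nonneg h1])
        using L2 h4 h2 ext(1) colz_def by (auto intro: sum_nonneg)
      finally show ?thesis using e1 by simp
    qed
  qed
qed

lemma inner_self: "inner S A A = complex_of_real (off S A)"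
  unfolding inner_def off_def of_real_sum
proof (rule sum.cong)
  fix p :: "nat \<times> nat"
  obtain s t where p: "p = (s,t)" by (cases p)
  show "(case p of (s, t) \<Rightarrow> A s t * cnj (A s t)) = complex_of_real (case p of (s, t) \<Rightarrow> (cmod (A s t))^2)"
    unfolding p using cmod_sq[of "A s t"] by simp
qed simp

lemma inner_bound: "finite S \<Longrightarrow> cmod (inner S U V) \<le> (off S U + off S V) / 2"
proof -
  assume fS: "finite S"
  have "cmod (inner S U V) \<le> (\<Sum>p\<in>Off S. cmod ((\<lambda>(s,t). U s t * cnj (V s t)) p))"
    unfolding inner_def by (rule norm_sum)
  also have "\<dots> \<le> (\<Sum>p\<in>Off S. ((\<lambda>(s,t). (cmod (U s t))^2) p + (\<lambda>(s,t). (cmod (V s t))^2) p) / 2)"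
  proof (rule sum_mono)
    fix p :: "nat \<times> nat"
    obtain s t where p: "p = (s,t)" by (cases p)
    have "cmod (U s t) * cmod (V s t) \<le> ((cmod (U s t))^2 + (cmod (V s t))^2) / 2"
      using sum_squares_bound[of "cmod (U s t)" "cmod (V s t)"] by simp
    thus "cmod ((\<lambda>(s,t). U s t * cnj (V s t)) p) \<le> ((\<lambda>(s,t). (cmod (U s t))^2) p + (\<lambda>(s,t). (cmod (V s t))^2) p) / 2"
      unfolding p by (simp add: norm_mult)
  qed
  also have "\<dots> = (off S U + off S V) / 2" by (simp only: off_def sum_divide_distrib[symmetric] sum.distrib)
  finally show ?thesis .
qed

lemma rev_serial:
  assumes "serial S ps" "0 \<le> \<kappa>" "\<kappa> < 1"
    and H: "\<And>cs A. length cs = length ps \<Longrightarrow> valid \<nu> cs \<Longrightarrow> off S (run ps cs A) \<le> \<kappa> * off S A"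
    and len: "length cs' = length ps" and v: "valid \<nu> cs'"
  shows "off S (run (rev ps) cs' B) \<le> 1 / (2 - \<kappa>) * off S B"
proof -
  have p: "finite S" "inS S ps" using serial_props[OF assms(1)] by auto
  let ?neg = "\<lambda>(c::real, e::complex). (c, -e)"
  let ?cs = "rev (map ?neg cs')"
  let ?A = "run (rev ps) cs' B"
  have l: "length ps = length ?cs" using len by simp
  have vc: "valid \<nu> ?cs" using v by (auto simp: valid_def)
  have nn: "rev (map ?neg ?cs) = cs'" by (simp add: rev_map[symmetric] map_map o_def case_prod_beta)
  have "inner S (run ps ?cs ?A) B = inner S ?A (run (rev ps) (rev (map ?neg ?cs)) B)"
    by (rule inner_run[OF p l])
  also have "\<dots> = complex_of_real (off S ?A)" unfolding nn inner_self ..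
  finally have eq: "complex_of_real (off S ?A) = inner S (run ps ?cs ?A) B" by simp
  have "off S ?A = cmod (complex_of_real (off S ?A))" using off_nonneg[of S ?A] by simp
  also have "\<dots> \<le> (off S (run ps ?cs ?A) + off S B) / 2" unfolding eq by (rule inner_bound[OF p(1)])
  also have "\<dots> \<le> (\<kappa> * off S ?A + off S B) / 2" using H[OF l[symmetric] vc, of ?A] by simp
  finally have "(2 - \<kappa>) * off S ?A \<le> off S B" by (simp add: algebra_simps)
  moreover have "0 < 2 - \<kappa>" using assms by simp
  ultimately show ?thesis by (simp add: field_simps)
qed


lemma sum_two_delta:
  assumes "i \<in> I" "j \<in> I" "i \<noteq> j" "finite I"
  shows "(\<Sum>k\<in>I. (if k = i then a else 0) + (if k = j then b else (0::complex))) = a + b"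
  using assms by (simp add: sum.distrib)

lemma cnj_expi: "cnj (exp (\<i> * complex_of_real a)) = exp (- (\<i> * complex_of_real a))"
proof -
  have "cnj (exp (\<i> * complex_of_real a)) = cnj (cis a)" by (simp add: cis_conv_exp)
  also have "\<dots> = cis (-a)" by (rule cis_cnj)
  also have "\<dots> = exp (- (\<i> * complex_of_real a))" by (simp add: cis_conv_exp)
  finally show ?thesis .
qed

lemma rot_col:
  fixes \<phi> \<alpha> :: real
  assumes ij: "i \<noteq> j" "i \<in> {1..n}" "j \<in> {1..n}" and t: "t \<in> {1..n}"
  defines "c \<equiv> complex_of_real (cos \<phi>)" and "e \<equiv> exp (\<i> * complex_of_real \<alpha>) * complex_of_real (sin \<phi>)"
  shows "(\<Sum>k=1..n. f k * rot i j \<phi> \<alpha> k t) =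
     (if t = i then f i * c + f j * cnj e else if t = j then - (f i * e) + f j * c else f t)"
proof -
  have ce: "cnj e = exp (- (\<i> * complex_of_real \<alpha>)) * complex_of_real (sin \<phi>)"
    unfolding e_def by (simp add: cnj_expi)
  show ?thesis
  proof (cases "t = i \<or> t = j")
    case True
    then show ?thesis
    proof
      assume ti: "t = i"
      have "\<forall>k. f k * rot i j \<phi> \<alpha> k t = (if k = i then f i * c else 0) + (if k = j then f j * cnj e else 0)"
        using ij ti unfolding ce c_def by (auto simp: rot_def)
      then show ?thesis using ti ij sum_two_delta[of i "{1..n}" j] by simp
    next
      assume tj: "t = j"
      have "\<forall>k. f k * rot i j \<phi> \<alpha> k t = (if k = i then - (f i * e) else 0) + (if k = j then f j * c else 0)"
        using ij tj unfolding e_def c_def by (auto simp: rot_def)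
      then show ?thesis using tj ij sum_two_delta[of i "{1..n}" j] by simp
    qed
  next
    case False
    have "\<forall>k. f k * rot i j \<phi> \<alpha> k t = (if k = t then f t else 0)"
      using False by (auto simp: rot_def)
    then show ?thesis using False t by simp
  qed
qed

lemma rot_row:
  fixes \<phi> \<alpha> :: real
  assumes ij: "i \<noteq> j" "i \<in> {1..n}" "j \<in> {1..n}" and s: "s \<in> {1..n}"
  defines "c \<equiv> complex_of_real (cos \<phi>)" and "e \<equiv> exp (\<i> * complex_of_real \<alpha>) * complex_of_real (sin \<phi>)"
  shows "mmul n (adj (rot i j \<phi> \<alpha>)) A s k =
     (if s = i then c * A i k + e * A j k else if s = j then - cnj e * A i k + c * A j k else A s k)"
proof -
  have "mmul n (adj (rot i j \<phi> \<alpha>)) A s k = cnj (\<Sum>l=1..n. cnj (A l k) * rot i j \<phi> \<alpha> l s)"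
    unfolding mmul_def adj_def by (simp add: mult.commute)
  also have "\<dots> = (if s = i then c * A i k + e * A j k else if s = j then - cnj e * A i k + c * A j k else A s k)"
    unfolding rot_col[OF ij s] c_def e_def by (auto simp: mult.commute)
  finally show ?thesis .
qed

lemma conj_eq_step:
  assumes ij: "i \<noteq> j" "i \<in> {1..n}" "j \<in> {1..n}" and st: "s \<in> {1..n}" "t \<in> {1..n}" "s \<noteq> t"
  shows "nuij i j (mmul n (mmul n (adj (rot i j \<phi> \<alpha>)) A) (rot i j \<phi> \<alpha>)) s t
       = step i j (cos \<phi>) (exp (\<i> * complex_of_real \<alpha>) * complex_of_real (sin \<phi>)) A s t"
proof -
  let ?B = "mmul n (adj (rot i j \<phi> \<alpha>)) A"
  have "mmul n ?B (rot i j \<phi> \<alpha>) s t = (\<Sum>k=1..n. ?B s k * rot i j \<phi> \<alpha> k t)" unfolding mmul_def ..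
  also have "\<dots> = (if t = i then ?B s i * complex_of_real (cos \<phi>) + ?B s j * cnj (exp (\<i> * complex_of_real \<alpha>) * complex_of_real (sin \<phi>))
      else if t = j then - (?B s i * (exp (\<i> * complex_of_real \<alpha>) * complex_of_real (sin \<phi>))) + ?B s j * complex_of_real (cos \<phi>) else ?B s t)"
    by (rule rot_col[OF ij st(2)])
  finally have H: "mmul n ?B (rot i j \<phi> \<alpha>) s t = \<dots>" .
  show ?thesis
    unfolding nuij_def H rot_row[OF ij st(1)]
    using ij st by (auto simp: step_def algebra_simps)
qed


definition up :: "nat \<Rightarrow> cmat \<Rightarrow> complex list" where
  "up n A = concat (map (\<lambda>t. map (\<lambda>s. A s t) [1..<t]) [2..<n+1])"

definition tr :: "cmat \<Rightarrow> cmat" where "tr A = (\<lambda>s t. A t s)"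

lemma ve_up: "ve n A = up n A @ up n (tr A)"
  unfolding ve_def up_def tr_def by simp

lemma up_0: "up 0 A = []" unfolding up_def by simp

lemma up_Suc: "up (Suc n) A = up n A @ map (\<lambda>s. A s (Suc n)) [1..<Suc n]"
proof (cases n)
  case 0 then show ?thesis by (simp add: up_def)
next
  case (Suc m)
  then show ?thesis unfolding up_def by simp
qed

lemma NN_Suc: "NN (Suc n) = NN n + n"
proof (cases n)
  case 0 then show ?thesis by (simp add: NN_def)
next
  case (Suc m)
  have "Suc n * n = n * (n - 1) + 2 * n" using Suc by (simp add: algebra_simps)
  thus ?thesis unfolding NN_def by simp
qed

lemma length_up: "length (up n A) = NN n"
  by (induction n) (simp_all add: up_0 up_Suc NN_Suc, simp add: NN_def)

lemma length_ve: "length (ve n A) = 2 * NN n"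
  by (simp add: ve_up length_up)

lemma up_cong: "(\<And>s t. 1 \<le> s \<Longrightarrow> s < t \<Longrightarrow> t \<le> n \<Longrightarrow> A s t = B s t) \<Longrightarrow> up n A = up n B"
proof (induction n)
  case 0 then show ?case by (simp add: up_0)
next
  case (Suc n)
  have "up n A = up n B" using Suc by simp
  moreover have "map (\<lambda>s. A s (Suc n)) [1..<Suc n] = map (\<lambda>s. B s (Suc n)) [1..<Suc n]"
    by (rule map_cong[OF refl]) (rule Suc.prems; auto)
  ultimately show ?case by (simp add: up_Suc)
qed

lemma ve_cong:
  assumes "\<And>s t. s \<in> {1..n} \<Longrightarrow> t \<in> {1..n} \<Longrightarrow> s \<noteq> t \<Longrightarrow> A s t = B s t"
  shows "ve n A = ve n B"
proof -
  have "up n A = up n B" by (rule up_cong) (use assms in auto)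
  moreover have "up n (tr A) = up n (tr B)" by (rule up_cong) (use assms in \<open>auto simp: tr_def\<close>)
  ultimately show ?thesis by (simp add: ve_up)
qed

definition sumsq :: "complex list \<Rightarrow> real" where
  "sumsq xs = (\<Sum>z\<leftarrow>xs. (cmod z)^2)"

lemma vnorm_sumsq: "vnorm x = sqrt (sumsq x)" unfolding vnorm_def sumsq_def ..

lemma sumsq_append: "sumsq (xs @ ys) = sumsq xs + sumsq ys" unfolding sumsq_def by simp

lemma sumsq_map_upt: "sumsq (map f [1..<Suc n]) = (\<Sum>s\<in>{1..n}. (cmod (f s))^2)"
proof -
  have "sumsq (map f [1..<Suc n]) = (\<Sum>s\<leftarrow>[1..<Suc n]. (cmod (f s))^2)" unfolding sumsq_def by (simp add: o_def)
  also have "\<dots> = (\<Sum>s\<in>{1..<Suc n}. (cmod (f s))^2)" by (simp add: sum_set_upt_conv_sum_list_nat[symmetric])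
  also have "{1..<Suc n} = {1..n}" by auto
  finally show ?thesis .
qed

lemma sumsq_ve: "sumsq (ve n A) = off {1..n} A"
proof (induction n)
  case 0
  have "Off {1..0} = {}" unfolding Off_def by auto
  then show ?case by (simp add: ve_up up_0 sumsq_def off_def)
next
  case (Suc n)
  have ins: "{1..Suc n} = insert (Suc n) {1..n}" by auto
  have "off {1..Suc n} A = off {1..n} A + colz {1..n} (Suc n) A"
    unfolding ins by (rule off_insert) auto
  also have "colz {1..n} (Suc n) A = (\<Sum>s\<in>{1..n}. (cmod (A s (Suc n)))^2) + (\<Sum>s\<in>{1..n}. (cmod (A (Suc n) s))^2)"
    unfolding colz_def by (simp add: sum.distrib)
  finally have "off {1..Suc n} A = off {1..n} A + ((\<Sum>s\<in>{1..n}. (cmod (A s (Suc n)))^2) + (\<Sum>s\<in>{1..n}. (cmod (A (Suc n) s))^2))" .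
  moreover have "sumsq (ve (Suc n) A) = sumsq (ve n A) + ((\<Sum>s\<in>{1..n}. (cmod (A s (Suc n)))^2) + (\<Sum>s\<in>{1..n}. (cmod (A (Suc n) s))^2))"
    unfolding ve_up up_Suc sumsq_append sumsq_map_upt by (simp add: tr_def)
  ultimately show ?case using Suc.IH by simp
qed

lemma vnorm_ve: "vnorm (ve n A) = sqrt (off {1..n} A)"
  by (simp add: vnorm_sumsq sumsq_ve)

lemma map_nth_shift: "map (\<lambda>s. d ! (s - 1)) [1..<Suc (length d)] = d"
  by (rule nth_equalityI) (simp_all del: upt_Suc add: nth_upt)

lemma up_surj: "length x = NN n \<Longrightarrow> \<exists>A. up n A = x"
proof (induction n arbitrary: x)
  case 0 then show ?case by (simp add: up_0 NN_def)
next
  case (Suc n)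
  let ?x1 = "take (NN n) x" and ?d = "drop (NN n) x"
  have "\<exists>A1. up n A1 = ?x1" using Suc.IH[of ?x1] Suc.prems by (simp add: NN_Suc)
  then obtain A1 where A1: "up n A1 = ?x1" by blast
  have ld: "length ?d = n" using Suc.prems by (simp add: NN_Suc)
  define A where "A = (\<lambda>s t. if t = Suc n then ?d ! (s - 1) else A1 s t)"
  have "up n A = up n A1" by (rule up_cong) (simp add: A_def)
  moreover have "map (\<lambda>s. A s (Suc n)) [1..<Suc n] = ?d"
  proof -
    have "map (\<lambda>s. A s (Suc n)) [1..<Suc n] = map (\<lambda>s. ?d ! (s - 1)) [1..<Suc (length ?d)]"
      using ld by (simp add: A_def del: upt_Suc)
    also have "\<dots> = ?d" by (rule map_nth_shift)
    finally show ?thesis .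
  qed
  ultimately have "up (Suc n) A = ?x1 @ ?d" using A1 by (simp add: up_Suc)
  thus ?case by auto
qed

lemma ve_surj:
  assumes "length x = 2 * NN n"
  shows "\<exists>A. ve n A = x"
proof -
  have "\<exists>A1. up n A1 = take (NN n) x" using up_surj[of "take (NN n) x" n] assms by simp
  then obtain A1 where A1: "up n A1 = take (NN n) x" by blast
  have "\<exists>A2. up n A2 = drop (NN n) x" using up_surj[of "drop (NN n) x" n] assms by simp
  then obtain A2 where A2: "up n A2 = drop (NN n) x" by blast
  define A where "A = (\<lambda>s t. if s < t then A1 s t else A2 t s)"
  have "up n A = up n A1" by (rule up_cong) (simp add: A_def)
  moreover have "up n (tr A) = up n A2" by (rule up_cong) (simp add: A_def tr_def)
  ultimately have "ve n A = take (NN n) x @ drop (NN n) x" using A1 A2 by (simp add: ve_up)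
  thus ?thesis by auto
qed

lemma length_matvec: "length (matvec m M x) = m" unfolding matvec_def by simp

lemma matvec_mmul0:
  assumes "length x = m"
  shows "matvec m (mmul0 m P Q) x = matvec m P (matvec m Q x)"
proof -
  have "\<And>p. (\<Sum>q<m. mmul0 m P Q p q * x ! q) = (\<Sum>k<m. P p k * matvec m Q x ! k)"
  proof -
    fix p
    have "(\<Sum>k<m. P p k * matvec m Q x ! k) = (\<Sum>k<m. P p k * (\<Sum>q<m. Q k q * x ! q))"
      by (rule sum.cong) (auto simp: matvec_def)
    also have "\<dots> = (\<Sum>k<m. \<Sum>q<m. P p k * Q k q * x ! q)" by (simp add: sum_distrib_left mult.assoc)
    also have "\<dots> = (\<Sum>q<m. \<Sum>k<m. P p k * Q k q * x ! q)" by (rule sum.swap)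
    also have "\<dots> = (\<Sum>q<m. mmul0 m P Q p q * x ! q)" by (simp add: mmul0_def sum_distrib_right)
    finally show "(\<Sum>q<m. mmul0 m P Q p q * x ! q) = (\<Sum>k<m. P p k * matvec m Q x ! k)" by simp
  qed
  thus ?thesis unfolding matvec_def[of m "mmul0 m P Q"] matvec_def[of m P] by simp
qed

lemma matvec_id0:
  assumes "length x = m"
  shows "matvec m id0 x = x"
proof (rule nth_equalityI)
  show "length (matvec m id0 x) = length x" using assms by (simp add: length_matvec)
next
  fix p assume "p < length (matvec m id0 x)"
  hence p: "p < m" by (simp add: length_matvec)
  have "matvec m id0 x ! p = (\<Sum>q<m. (if p = q then 1 else 0) * x ! q)" using p by (simp add: matvec_def id0_def)
  also have "\<dots> = (\<Sum>q<m. (if p = q then x ! p else 0))" by (rule sum.cong) auto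
  also have "\<dots> = x ! p" using p by simp
  finally show "matvec m id0 x ! p = x ! p" .
qed



lemma jac_run:
  assumes "length Ms = length ordr"
    "\<forall>k<length ordr. Ms!k \<in> annihilators n (fst (ordr!k)) (snd (ordr!k)) \<nu>"
    "\<forall>(i,j)\<in>set ordr. i \<in> {1..n} \<and> j \<in> {1..n} \<and> i \<noteq> j"
  shows "\<exists>cs. length cs = length ordr \<and> valid \<nu> cs \<and>
     (\<forall>A. matvec (2*NN n) (mprod (2*NN n) Ms) (ve n A) = ve n (run ordr cs A))"
  using assms
proof (induction Ms ordr rule: list_induct2)
  case Nil
  show ?case by (rule exI[of _ "[]"]) (simp add: valid_def matvec_id0 length_ve)
next
  case (Cons M Ms p ps)
  obtain i j where p: "p = (i,j)" by (cases p)
  have "\<forall>k<length ps. Ms!k \<in> annihilators n (fst (ps!k)) (snd (ps!k)) \<nu>"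
    using Cons.prems(1) by auto
  then obtain cs where cs: "length cs = length ps" "valid \<nu> cs"
    "\<forall>A. matvec (2*NN n) (mprod (2*NN n) Ms) (ve n A) = ve n (run ps cs A)"
    using Cons.IH Cons.prems(2) by auto
  have "M \<in> annihilators n i j \<nu>" using Cons.prems(1) p by force
  then obtain \<phi> \<alpha> where pa: "\<nu> \<le> \<bar>cos \<phi>\<bar>"
    "\<forall>A. matvec (2 * NN n) M (ve n A) = ve n (nuij i j (mmul n (mmul n (adj (rot i j \<phi> \<alpha>)) A) (rot i j \<phi> \<alpha>)))"
    unfolding annihilators_def by blast
  have ij: "i \<noteq> j" "i \<in> {1..n}" "j \<in> {1..n}" using Cons.prems(2) p by auto
  let ?e = "exp (\<i> * complex_of_real \<alpha>) * complex_of_real (sin \<phi>)"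
  have ce: "(cos \<phi>)^2 + (cmod ?e)^2 = 1" by (simp add: norm_mult)
  show ?case
  proof (intro exI[of _ "(cos \<phi>, ?e) # cs"] conjI allI)
    show "length ((cos \<phi>, ?e) # cs) = length (p # ps)" using cs by simp
    show "valid \<nu> ((cos \<phi>, ?e) # cs)" using cs pa ce by (simp add: valid_Cons)
    fix A
    have "matvec (2*NN n) (mprod (2*NN n) (M # Ms)) (ve n A)
        = matvec (2*NN n) (mprod (2*NN n) Ms) (matvec (2*NN n) M (ve n A))"
      by (simp add: matvec_mmul0 length_ve)
    also have "matvec (2*NN n) M (ve n A) = ve n (step i j (cos \<phi>) ?e A)"
      unfolding pa(2)[rule_format] by (rule ve_cong) (rule conj_eq_step[OF ij]; simp)
    finally show "matvec (2*NN n) (mprod (2*NN n) (M # Ms)) (ve n A) = ve n (run (p # ps) ((cos \<phi>, ?e) # cs) A)"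
      using cs(3) p by simp
  qed
qed

lemma Cc_serial:
  assumes "1 \<le> n" "ord \<in> Cc n"
  shows "serial {1..n} ord"
proof -
  obtain \<tau> where ord: "ord = concat (map (\<lambda>j. map (\<lambda>k. (\<tau> j k, j)) [1..<j]) [2..<n+1])"
    and bij: "\<forall>j\<in>{2..n}. bij_betw (\<tau> j) {1..<j} {1..<j}"
    using assms(2) unfolding Cc_def by blast
  have "\<forall>m. 1 \<le> m \<longrightarrow> m \<le> n \<longrightarrow> serial {1..m} (concat (map (\<lambda>j. map (\<lambda>k. (\<tau> j k, j)) [1..<j]) [2..<m+1]))"
  proof (intro allI impI)
    fix m assume "1 \<le> m" "m \<le> n"
    then show "serial {1..m} (concat (map (\<lambda>j. map (\<lambda>k. (\<tau> j k, j)) [1..<j]) [2..<m+1]))"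
    proof (induction m rule: dec_induct)
      case base
      have "serial {1} []" by (rule serial.base)
      then show ?case by simp
    next
      case (step m)
      have b: "bij_betw (\<tau> (Suc m)) {1..<Suc m} {1..<Suc m}" using bij step by auto
      let ?qs = "map (\<tau> (Suc m)) [1..<Suc m]"
      have d: "distinct ?qs" using b unfolding bij_betw_def by (simp add: distinct_map del: upt_Suc)
      have "set ?qs = \<tau> (Suc m) ` {1..<Suc m}" by (simp del: upt_Suc)
      also have "\<dots> = {1..<Suc m}" using b by (simp add: bij_betw_def)
      also have "\<dots> = {1..m}" by auto
      finally have sq: "set ?qs = {1..m}" .
      have "serial (insert (Suc m) {1..m}) (concat (map (\<lambda>j. map (\<lambda>k. (\<tau> j k, j)) [1..<j]) [2..<m+1]) @ map (\<lambda>q. (q, Suc m)) ?qs)"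
        by (rule serial.ext) (use step d sq in auto)
      moreover have "insert (Suc m) {1..m} = {1..Suc m}" by auto
      moreover have "[2..<Suc m + 1] = [2..<m+1] @ [Suc m]" using step by simp
      ultimately show ?case by (simp add: o_def)
    qed
  qed
  thus ?thesis using assms(1) ord by simp
qed

lemma Cr_serial:
  assumes "1 \<le> n" "ord \<in> Cr n"
  shows "serial {1..n} ord"
proof -
  obtain \<tau> where ord: "ord = concat (map (\<lambda>i. map (\<lambda>k. (i, \<tau> i k)) [i+1..<n+1]) (rev [1..<n]))"
    and bij: "\<forall>i\<in>{1..<n}. bij_betw (\<tau> i) {i+1..n} {i+1..n}"
    using assms(2) unfolding Cr_def by blast
  have "\<forall>d. d < n \<longrightarrow> serial {n-d..n} (concat (map (\<lambda>i. map (\<lambda>k. (i, \<tau> i k)) [i+1..<n+1]) (rev [n-d..<n])))"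
  proof (intro allI impI)
    fix d assume "d < n"
    then show "serial {n-d..n} (concat (map (\<lambda>i. map (\<lambda>k. (i, \<tau> i k)) [i+1..<n+1]) (rev [n-d..<n])))"
    proof (induction d)
      case 0
      have "serial {n} []" by (rule serial.base)
      then show ?case by simp
    next
      case (Suc d)
      define a where "a = n - Suc d"
      have a: "1 \<le> a" "a < n" "a + 1 = n - d" using Suc.prems unfolding a_def by auto
      have "a \<in> {1..<n}" using a by auto
      note b = bij[rule_format, OF this]
      let ?qs = "map (\<tau> a) [a+1..<n+1]"
      have d: "distinct ?qs" using b unfolding bij_betw_def by (simp add: distinct_map atLeastLessThanSuc_atLeastAtMost del: upt_Suc)
      have "set ?qs = \<tau> a ` {a+1..<n+1}" by (simp del: upt_Suc)
      also have "{a+1..<n+1} = {a+1..n}" by auto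
      also have "\<tau> a ` {a+1..n} = {a+1..n}" using b by (simp add: bij_betw_def)
      finally have sq: "set ?qs = {a+1..n}" .
      have IH: "serial {a+1..n} (concat (map (\<lambda>i. map (\<lambda>k. (i, \<tau> i k)) [i+1..<n+1]) (rev [a+1..<n])))"
        using Suc a by simp
      have "serial (insert a {a+1..n}) (concat (map (\<lambda>i. map (\<lambda>k. (i, \<tau> i k)) [i+1..<n+1]) (rev [a+1..<n])) @ map (\<lambda>q. (a, q)) ?qs)"
        by (rule serial.ext[OF IH]) (use d sq in auto)
      moreover have "insert a {a+1..n} = {n - Suc d..n}" using a unfolding a_def by auto
      moreover have "rev [n - Suc d..<n] = rev [a+1..<n] @ [a]" using a unfolding a_def by (simp add: upt_rec)
      ultimately show ?case by (simp add: o_def a_def)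
    qed
  qed
  note H = this
  have lt: "n - 1 < n" using assms(1) by simp
  have n1: "n - (n-1) = 1" using assms(1) by simp
  have "serial {n-(n-1)..n} (concat (map (\<lambda>i. map (\<lambda>k. (i, \<tau> i k)) [i+1..<n+1]) (rev [n-(n-1)..<n])))"
    by (rule H[rule_format, OF lt])
  then show ?thesis unfolding n1 ord .
qed


lemma NN_pos: "2 \<le> n \<Longrightarrow> 1 \<le> NN n"
proof -
  assume n: "2 \<le> n"
  have "1 \<le> n - 1" using n by simp
  hence "2 * 1 \<le> n * (n - 1)" using n by (intro mult_le_mono) auto
  thus ?thesis unfolding NN_def by simp
qed

theorem theorem3p3:
  fixes n :: nat and \<nu> :: real
  assumes "2 \<le> n" and "0 < \<nu>" and "\<nu> \<le> 1"
  shows "\<exists>\<mu>. 0 \<le> \<mu> \<and> \<mu> < 1 \<and>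
           (\<forall>ordr \<in> Csp n. \<forall>J \<in> jacobi_ops n ordr \<nu>. spec_norm (2 * NN n) J \<le> \<mu>)"
proof -
  obtain \<kappa> where k: "0 \<le> \<kappa>" "\<kappa> < 1" and Hk: "\<forall>S ps cs A. serial S ps \<longrightarrow> card S = n \<longrightarrow> length cs = length ps \<longrightarrow>
      valid \<nu> cs \<longrightarrow> off S (run ps cs A) \<le> \<kappa> * off S A"
    using main_serial[OF assms(2,3), of n] by blast
  define \<rho> where "\<rho> = 1 / (2 - \<kappa>)"
  have \<rho>: "0 \<le> \<rho>" "\<rho> < 1" "\<kappa> \<le> \<rho>"
  proof -
    show "0 \<le> \<rho>" "\<rho> < 1" using k unfolding \<rho>_def by (auto simp: field_simps)
    have "0 \<le> (1 - \<kappa>)^2" by simp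
    hence "\<kappa> * (2 - \<kappa>) \<le> 1" by (simp add: power2_eq_square algebra_simps)
    thus "\<kappa> \<le> \<rho>" using k unfolding \<rho>_def by (simp add: field_simps)
  qed
  let ?S = "{1..n::nat}"
  let ?m = "2 * NN n"
  have cS: "card ?S = n" by simp
  have n1: "1 \<le> n" using assms(1) by simp
  have ser: "\<exists>ps. serial ?S ps \<and> (ordr = ps \<or> ordr = rev ps)" if "ordr \<in> Csp n" for ordr
    using that Cc_serial[OF n1] Cr_serial[OF n1] unfolding Csp_def by blast
  have bound: "off ?S (run ordr cs A) \<le> \<rho> * off ?S A"
    if hyp: "ordr \<in> Csp n" "length cs = length ordr" "valid \<nu> cs" for ordr cs A
  proof -
    obtain ps where ps: "serial ?S ps" "ordr = ps \<or> ordr = rev ps" using ser[OF hyp(1)] by blast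
    show ?thesis
    proof (cases "ordr = ps")
      case True
      have "off ?S (run ordr cs A) \<le> \<kappa> * off ?S A" using Hk ps(1) cS hyp True by blast
      also have "\<dots> \<le> \<rho> * off ?S A" using \<rho> off_nonneg[of ?S A] by (intro mult_right_mono) auto
      finally show ?thesis .
    next
      case False
      hence r: "ordr = rev ps" using ps by blast
      have "off ?S (run (rev ps) cs A) \<le> 1 / (2 - \<kappa>) * off ?S A"
        by (rule rev_serial[OF ps(1) k]) (use Hk ps(1) cS hyp r in auto)
      thus ?thesis unfolding \<rho>_def r .
    qed
  qed
  have pairs: "\<forall>(i,j)\<in>set ordr. i \<in> ?S \<and> j \<in> ?S \<and> i \<noteq> j" if hyp: "ordr \<in> Csp n" for ordr
  proof -
    obtain ps where ps: "serial ?S ps" "ordr = ps \<or> ordr = rev ps" using ser[OF hyp] by blast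
    have "inS ?S ps" using serial_props[OF ps(1)] by simp
    thus ?thesis using ps(2) unfolding inS_def by auto
  qed
  have m1: "1 \<le> ?m" using NN_pos[OF assms(1)] by simp
  show ?thesis
  proof (intro exI[of _ "sqrt \<rho>"] conjI ballI)
    show "0 \<le> sqrt \<rho>" using \<rho> by simp
    show "sqrt \<rho> < 1" using \<rho> by simp
    fix ordr J assume o: "ordr \<in> Csp n" and J: "J \<in> jacobi_ops n ordr \<nu>"
    obtain Ms where Ms: "J = mprod ?m Ms" "length Ms = length ordr"
      "\<forall>k < length ordr. Ms ! k \<in> annihilators n (fst (ordr ! k)) (snd (ordr ! k)) \<nu>"
      using J unfolding jacobi_ops_def by blast
    obtain cs where cs: "length cs = length ordr" "valid \<nu> cs"
      "\<forall>A. matvec ?m (mprod ?m Ms) (ve n A) = ve n (run ordr cs A)"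
      using jac_run[OF Ms(2,3) pairs[OF o]] by blast
    let ?X = "{vnorm (matvec ?m J x) | x. length x = ?m \<and> vnorm x = 1}"
    have ne: "?X \<noteq> {}"
    proof -
      let ?x = "1 # replicate (?m - 1) (0::complex)"
      have "length ?x = ?m" using m1 by simp
      moreover have "vnorm ?x = 1" unfolding vnorm_def by (simp add: sum_list_replicate)
      ultimately show ?thesis by blast
    qed
    have "\<forall>y\<in>?X. y \<le> sqrt \<rho>"
    proof
      fix y assume "y \<in> ?X"
      then obtain x where x: "y = vnorm (matvec ?m J x)" "length x = ?m" "vnorm x = 1" by blast
      obtain A where A: "ve n A = x" using ve_surj[OF x(2)] by blast
      have "y = sqrt (off ?S (run ordr cs A))" unfolding x(1) A[symmetric] Ms(1) cs(3)[rule_format] vnorm_ve ..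
      also have "\<dots> \<le> sqrt (\<rho> * off ?S A)" using bound[OF o cs(1,2)] by simp
      also have "\<dots> = sqrt \<rho> * vnorm x" unfolding A[symmetric] vnorm_ve by (simp add: real_sqrt_mult)
      finally show "y \<le> sqrt \<rho>" using x(3) by simp
    qed
    thus "spec_norm ?m J \<le> sqrt \<rho>" unfolding spec_norm_def using ne by (intro cSup_least) auto
  qed
qed


end
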